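(* Let $K\subset\mathbb P^1$ be a compact set such that $\Omega=\mathbb P^1\setminus K$ admits a bounded injective holomorphic function. Let $p_1,\dots,p_m\in\Omega$ be distinct points and set $\Omega'=\Omega\setminus\{p_1,\dots,p_m\}$. Then for each $j=1,\dots,m$, $$\lim_{\Omega'\ni z\to p_j}S_{\Omega'}(z)=0.$$
   Context: Let $\triangle\subset\mathbb C$ be the unit disc and $B_r(p)$ the open disc of radius $r$ centred at $p$. For a domain $\Omega\subset\mathbb P^1$, $x\in\Omega$, and an injective holomorphic $\varphi:\Omega\to\triangle$ with $\varphi(x)=0$, set $S_{\Omega,\varphi}(x)=\sup\{r>0:B_r(0)\subset\varphi(\Omega)\}$; the squeezing function is $S_\Omega(x)=\sup_\varphi S_{\Omega,\varphi}(x)$ over all such $\varphi$. *)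

theory Defs
  imports "HOL-Analysis.Analysis"
begin

text \<open>The Riemann sphere P^1 is modelled as complex option:
  Some z is the finite point z and None is the point at infinity.\<close>

type_synonym riemann_sphere = "complex option"

definition p1_open :: "riemann_sphere set \<Rightarrow> bool" where
  "p1_open U \<longleftrightarrow> open {z. Some z \<in> U} \<and>
     (None \<in> U \<longrightarrow> (\<exists>R. \<forall>z. R < norm z \<longrightarrow> Some z \<in> U))"

lemma istopology_p1_open: "istopology p1_open"
  unfolding istopology_def
proof (intro conjI allI impI ballI)
  fix S T assume S: "p1_open S" and T: "p1_open T"
  have "{z. Some z \<in> S \<inter> T} = {z. Some z \<in> S} \<inter> {z. Some z \<in> T}" by auto
  moreover have "None \<in> S \<inter> T \<longrightarrow> (\<exists>R. \<forall>z. R < norm z \<longrightarrow> Some z \<in> S \<inter> T)"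
  proof
    assume "None \<in> S \<inter> T"
    then obtain R1 R2 where "\<forall>z. R1 < norm z \<longrightarrow> Some z \<in> S" "\<forall>z. R2 < norm z \<longrightarrow> Some z \<in> T"
      using S T unfolding p1_open_def by blast
    then show "\<exists>R. \<forall>z. R < norm z \<longrightarrow> Some z \<in> S \<inter> T"
      by (intro exI[of _ "max R1 R2"]) auto
  qed
  ultimately show "p1_open (S \<inter> T)"
    using S T unfolding p1_open_def by (auto intro: open_Int)
next
  fix \<K> assume K: "\<forall>K\<in>\<K>. p1_open K"
  have "{z. Some z \<in> \<Union>\<K>} = (\<Union>K\<in>\<K>. {z. Some z \<in> K})" by auto
  moreover have "open (\<Union>K\<in>\<K>. {z. Some z \<in> K})"
    using K unfolding p1_open_def by auto
  moreover have "None \<in> \<Union>\<K> \<longrightarrow> (\<exists>R. \<forall>z. R < norm z \<longrightarrow> Some z \<in> \<Union>\<K>)"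
    using K unfolding p1_open_def by blast
  ultimately show "p1_open (\<Union>\<K>)" unfolding p1_open_def by simp
qed

definition p1_top :: "riemann_sphere topology" where
  "p1_top = topology p1_open"

lemma openin_p1_top: "openin p1_top U \<longleftrightarrow> p1_open U"
  unfolding p1_top_def using istopology_p1_open by simp

definition p1_holomorphic_on :: "(riemann_sphere \<Rightarrow> complex) \<Rightarrow> riemann_sphere set \<Rightarrow> bool" where
  "p1_holomorphic_on f \<Omega> \<longleftrightarrow>
     (\<lambda>z. f (Some z)) holomorphic_on {z. Some z \<in> \<Omega>} \<and>
     (None \<in> \<Omega> \<longrightarrow>
        (\<lambda>w. f (if w = 0 then None else Some (1 / w))) holomorphic_on
          {w. (if w = 0 then None else Some (1 / w)) \<in> \<Omega>})"

definition squeezing_function :: "riemann_sphere set \<Rightarrow> riemann_sphere \<Rightarrow> real" where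
  "squeezing_function \<Omega> x =
     (SUP \<phi> \<in> {\<phi>. p1_holomorphic_on \<phi> \<Omega> \<and> inj_on \<phi> \<Omega> \<and> \<phi> ` \<Omega> \<subseteq> ball 0 1 \<and> \<phi> x = 0}.
        Sup {r. 0 < r \<and> ball 0 r \<subseteq> \<phi> ` \<Omega>})"

end

theory Submission
  imports Defs "HOL-Complex_Analysis.Complex_Analysis"
begin

definition chart :: "riemann_sphere \<Rightarrow> complex \<Rightarrow> riemann_sphere" where
  "chart q w = (case q of Some b \<Rightarrow> Some (b + w) | None \<Rightarrow> (if w = 0 then None else Some (1/w)))"

lemma chart_0 [simp]: "chart q 0 = q"
  by (cases q) (auto simp: chart_def)

lemma chart_inj: "chart q u = chart q v \<Longrightarrow> u = v"
  by (cases q) (auto simp: chart_def split: if_splits)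

lemma chart_open: assumes "e > 0" shows "p1_open (chart q ` ball 0 e)"
proof (cases q)
  case None
  have eq: "{z. Some z \<in> chart q ` ball 0 e} = {z. 1/e < norm z}"
  proof (rule set_eqI, rule iffI)
    fix z assume "z \<in> {z. Some z \<in> chart q ` ball 0 e}"
    then obtain w where w: "w \<in> ball 0 e" "Some z = chart q w" by auto
    then have "w \<noteq> 0" "z = 1/w" using None by (auto simp: chart_def split: if_splits)
    have "norm z = 1 / norm w" using \<open>z = 1/w\<close> by (simp add: norm_divide)
    moreover have "1/e < 1 / norm w" using w assms \<open>w \<noteq> 0\<close> by (intro divide_strict_left_mono) (auto intro!: mult_pos_pos)
    ultimately show "z \<in> {z. 1/e < norm z}" by simp
  next
    fix z :: complex assume "z \<in> {z. 1/e < norm z}"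
    then have z: "1/e < norm z" by simp
    then have "z \<noteq> 0" using assms by (auto simp: field_simps)
    moreover have "norm (1/z) < e" using z assms \<open>z \<noteq> 0\<close> by (auto simp: norm_divide field_simps)
    ultimately have "chart q (1/z) = Some z" "1/z \<in> ball 0 e" using None by (auto simp: chart_def)
    then show "z \<in> {z. Some z \<in> chart q ` ball 0 e}" by (metis image_eqI mem_Collect_eq)
  qed
  have "open {z::complex. 1/e < norm z}"
    by (intro open_Collect_less continuous_intros)
  moreover have "\<forall>z. 1/e < norm z \<longrightarrow> Some z \<in> chart q ` ball 0 e" using eq by blast
  ultimately show ?thesis unfolding p1_open_def eq by blast
next
  case (Some b)
  have eq: "{z. Some z \<in> chart q ` ball 0 e} = ball b e"
  proof (rule set_eqI, rule iffI)
    fix z assume "z \<in> {z. Some z \<in> chart q ` ball 0 e}"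
    then show "z \<in> ball b e" using Some by (auto simp: chart_def dist_norm)
  next
    fix z assume "z \<in> ball b e"
    then have "chart q (z - b) = Some z" "z - b \<in> ball 0 e" using Some by (auto simp: chart_def dist_norm norm_minus_commute)
    then show "z \<in> {z. Some z \<in> chart q ` ball 0 e}" by (metis image_eqI mem_Collect_eq)
  qed
  have "None \<notin> chart q ` ball 0 e" using Some by (auto simp: chart_def)
  then show ?thesis unfolding p1_open_def eq by auto
qed

lemma chart_nhd: assumes "p1_open U" "q \<in> U" shows "\<exists>e>0. chart q ` ball 0 e \<subseteq> U"
proof (cases q)
  case None
  then obtain R where R: "\<forall>z. R < norm z \<longrightarrow> Some z \<in> U" using assms unfolding p1_open_def by auto
  define e where "e = 1 / max R 1"
  have "e > 0" by (simp add: e_def)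
  moreover have "chart q w \<in> U" if "w \<in> ball 0 e" for w
  proof (cases "w = 0")
    case True then show ?thesis using assms by simp
  next
    case False
    have nw: "norm w > 0" using False by simp
    have "norm w < 1 / max R 1" using that by (simp add: e_def)
    then have "norm w * max R 1 < 1" by (simp add: pos_less_divide_eq)
    then have "max R 1 < 1 / norm w" using nw by (metis mult.commute pos_less_divide_eq)
    then have "R < norm (1/w)" by (simp add: norm_divide)
    then show ?thesis using R False None by (simp add: chart_def)
  qed
  ultimately show ?thesis by blast
next
  case (Some b)
  then have "open {z. Some z \<in> U}" "b \<in> {z. Some z \<in> U}" using assms by (auto simp: p1_open_def)
  then obtain e where e: "e > 0" "ball b e \<subseteq> {z. Some z \<in> U}" using open_contains_ball by blast
  have "chart q w \<in> U" if "w \<in> ball 0 e" for w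
    using that e Some by (auto simp: chart_def dist_norm subset_iff)
  then show ?thesis using e by blast
qed

lemma chart_sep: assumes "q \<noteq> y"
  shows "\<exists>e>0. \<forall>u v. norm u < e \<longrightarrow> norm v < e \<longrightarrow> chart q u \<noteq> chart y v"
proof -
  have one: "\<exists>e>0. \<forall>u v. norm u < e \<longrightarrow> norm v < e \<longrightarrow> chart (Some a) u \<noteq> chart None v" for a
  proof (intro exI[of _ "1 / (norm a + 1)"] conjI allI impI)
    have pos: "0 < norm a + 1" using norm_ge_zero[of a] by linarith
    then show "0 < 1 / (norm a + 1)" by simp
    fix u v :: complex assume u: "norm u < 1 / (norm a + 1)" and v: "norm v < 1 / (norm a + 1)"
    have pos: "0 < norm a + 1" using norm_ge_zero[of a] by linarith
    have le1: "1 / (norm a + 1) \<le> 1" using pos by (simp add: divide_le_eq)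
    show "chart (Some a) u \<noteq> chart None v"
    proof
      assume eq: "chart (Some a) u = chart None v"
      then have "v \<noteq> 0" "a + u = 1/v" by (auto simp: chart_def split: if_splits)
      have "norm v * (norm a + 1) < 1" using v pos by (simp add: pos_less_divide_eq)
      then have "norm a + 1 < 1 / norm v" using \<open>v \<noteq> 0\<close> by (simp add: pos_less_divide_eq mult.commute)
      then have "norm (1/v) > norm a + 1" by (simp add: norm_divide)
      moreover have "norm (a + u) \<le> norm a + 1" using u le1 norm_triangle_ineq[of a u] by linarith
      ultimately show False using \<open>a + u = 1/v\<close> by simp
    qed
  qed
  show ?thesis
  proof (cases q)
    case None
    then obtain b where b: "y = Some b" using assms by (cases y) auto
    from one[of b] show ?thesis unfolding None b by metis
  next
    case (Some a)
    show ?thesis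
    proof (cases y)
      case None
      from one[of a] show ?thesis unfolding None Some by metis
    next
      case (Some b)
      then have "a \<noteq> b" using assms \<open>q = Some a\<close> by auto
      show ?thesis
      proof (intro exI[of _ "norm (a - b) / 2"] conjI allI impI)
        show "0 < norm (a - b) / 2" using \<open>a \<noteq> b\<close> by simp
        fix u v :: complex assume u: "norm u < norm (a - b) / 2" and v: "norm v < norm (a - b) / 2"
        show "chart q u \<noteq> chart y v"
        proof
          assume "chart q u = chart y v"
          then have "a + u = b + v" using Some \<open>q = Some a\<close> by (simp add: chart_def)
          then have "a - b = v - u" by (simp add: algebra_simps)
          then have "norm (a - b) \<le> norm v + norm u" by (metis norm_triangle_ineq4)
          then show False using u v by simp
        qed
      qed
    qed
  qed
qed

lemma Hausdorff_p1: "Hausdorff_space p1_top"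
  unfolding Hausdorff_space_def
proof (intro allI impI)
  fix x y assume "x \<in> topspace p1_top \<and> y \<in> topspace p1_top \<and> x \<noteq> y"
  then obtain e where e: "e > 0" "\<forall>u v. norm u < e \<longrightarrow> norm v < e \<longrightarrow> chart x u \<noteq> chart y v"
    using chart_sep by blast
  show "\<exists>U V. openin p1_top U \<and> openin p1_top V \<and> x \<in> U \<and> y \<in> V \<and> disjnt U V"
  proof (intro exI conjI)
    show "openin p1_top (chart x ` ball 0 e)" "openin p1_top (chart y ` ball 0 e)"
      using chart_open[OF e(1)] by (auto simp: openin_p1_top)
    show "x \<in> chart x ` ball 0 e" "y \<in> chart y ` ball 0 e"
      using e(1) by (metis chart_0 centre_in_ball image_eqI)+
    show "disjnt (chart x ` ball 0 e) (chart y ` ball 0 e)"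
      using e(2) by (auto simp: disjnt_def)
  qed
qed

lemma topspace_p1 [simp]: "topspace p1_top = UNIV"
proof -
  have "p1_open UNIV" by (auto simp: p1_open_def)
  then show ?thesis using openin_subset[of p1_top UNIV] by (auto simp: openin_p1_top)
qed


lemma chart_holo:
  assumes "p1_holomorphic_on \<phi> \<Omega>" "open S" "\<forall>w\<in>S. chart q w \<in> \<Omega>"
  shows "(\<lambda>w. \<phi> (chart q w)) holomorphic_on S"
proof (cases q)
  case (Some b)
  have h: "(\<lambda>z. \<phi> (Some z)) holomorphic_on {z. Some z \<in> \<Omega>}" using assms(1) by (simp add: p1_holomorphic_on_def)
  have "((\<lambda>z. \<phi> (Some z)) \<circ> (\<lambda>w. b + w)) holomorphic_on S"
    by (rule holomorphic_on_compose_gen[OF _ h]) (use assms(3) Some in \<open>auto intro!: holomorphic_intros simp: chart_def\<close>)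
  then show ?thesis using Some by (simp add: chart_def o_def)
next
  case None
  show ?thesis
  proof (cases "None \<in> \<Omega>")
    case True
    then have "(\<lambda>w. \<phi> (if w = 0 then None else Some (1 / w))) holomorphic_on
          {w. (if w = 0 then None else Some (1 / w)) \<in> \<Omega>}" using assms(1) by (simp add: p1_holomorphic_on_def)
    then have "(\<lambda>w. \<phi> (if w = 0 then None else Some (1 / w))) holomorphic_on S"
      by (rule holomorphic_on_subset) (use assms(3) None in \<open>auto simp: chart_def\<close>)
    then show ?thesis using None by (simp add: chart_def)
  next
    case False
    then have S0: "0 \<notin> S" using assms(3) None by (metis chart_0)
    have h: "(\<lambda>z. \<phi> (Some z)) holomorphic_on {z. Some z \<in> \<Omega>}" using assms(1) by (simp add: p1_holomorphic_on_def)
    have "((\<lambda>z. \<phi> (Some z)) \<circ> (\<lambda>w. 1 / w)) holomorphic_on S"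
    proof (rule holomorphic_on_compose_gen[OF _ h])
      show "(\<lambda>w. 1 / w) holomorphic_on S" using S0 by (auto intro!: holomorphic_intros)
      show "(\<lambda>w. 1 / w) ` S \<subseteq> {z. Some z \<in> \<Omega>}"
      proof
        fix z assume "z \<in> (\<lambda>w. 1 / w) ` S"
        then obtain w where "w \<in> S" "z = 1 / w" by auto
        then show "z \<in> {z. Some z \<in> \<Omega>}" using assms(3) None S0 by (auto simp: chart_def split: if_splits)
      qed
    qed
    then show ?thesis
      by (rule holomorphic_transform) (use S0 None in \<open>auto simp: chart_def\<close>)
  qed
qed

lemma core_extend:
  fixes g :: "complex \<Rightarrow> complex"
  assumes R: "R > 0" and holg: "g holomorphic_on (ball 0 R - {0})"
    and bd: "\<forall>u\<in>ball 0 R - {0}. norm (g u) < 1"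
  shows "\<exists>G. G holomorphic_on ball 0 R \<and> (\<forall>u\<in>ball 0 R - {0}. G u = g u) \<and> (\<forall>u\<in>ball 0 R. norm (G u) \<le> 1)"
proof -
  have ev: "eventually (\<lambda>z. norm (g z) \<le> 1) (at 0)"
    unfolding eventually_at using R bd by (intro exI[of _ R]) (auto simp: dist_norm less_imp_le)
  have "\<exists>G. G holomorphic_on ball 0 R \<and> (\<forall>z \<in> ball 0 R - {0}. G z = g z)"
    using holomorphic_on_extend_bounded[of g "ball 0 R" 0] holg R ev by auto
  then obtain G where G: "G holomorphic_on ball 0 R" "\<forall>z \<in> ball 0 R - {0}. G z = g z" by blast
  have "isCont G 0"
    using G(1) R by (intro continuous_on_interior[OF holomorphic_on_imp_continuous_on]) auto
  then have lim: "(G \<longlongrightarrow> G 0) (at 0)" by (simp add: isCont_def)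
  have ev2: "eventually (\<lambda>z. norm (G z) \<le> 1) (at 0)"
    unfolding eventually_at using R bd G(2) by (intro exI[of _ R]) (auto simp: dist_norm less_imp_le)
  have "norm (G 0) \<le> 1"
    by (rule Lim_norm_ubound[OF _ lim ev2]) simp
  then have "\<forall>u\<in>ball 0 R. norm (G u) \<le> 1"
    using bd G(2) by (metis Diff_iff empty_iff insert_iff less_imp_le)
  then show ?thesis using G by blast
qed

lemma core_lip:
  fixes G :: "complex \<Rightarrow> complex"
  assumes R: "R > 0" and holG: "G holomorphic_on ball 0 R"
    and bd: "\<forall>u\<in>ball 0 R. norm (G u) \<le> 1" and w: "norm w < R/2"
  shows "norm (G w - G 0) \<le> 2/R * norm (w - 0)"
proof (rule field_differentiable_bound[of "ball 0 (R/2)" G "deriv G"])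
  show "convex (ball (0::complex) (R/2))" by simp
  show "w \<in> ball 0 (R/2)" "0 \<in> ball 0 (R/2)" using w R by auto
next
  fix z assume z: "z \<in> ball (0::complex) (R/2)"
  then have "z \<in> ball 0 R" using R by auto
  then show "(G has_field_derivative deriv G z) (at z within ball 0 (R/2))"
    using holG by (intro holomorphic_derivI) auto
  have sub: "cball z (R/2) \<subseteq> ball 0 R"
  proof
    fix y assume "y \<in> cball z (R/2)"
    then have "norm (y - z) \<le> R/2" by (simp add: dist_norm norm_minus_commute)
    moreover have "norm z < R/2" using z by simp
    ultimately have "norm y < R" using norm_triangle_ineq[of "y - z" z] by simp
    then show "y \<in> ball 0 R" by simp
  qed
  have "norm ((deriv ^^ 1) G z) \<le> fact 1 * 1 / (R/2)^1"
  proof (rule Cauchy_inequality)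
    show "G holomorphic_on ball z (R/2)" using holG sub ball_subset_cball by (blast intro: holomorphic_on_subset)
    show "continuous_on (cball z (R/2)) G" using holG sub
      by (blast intro: continuous_on_subset holomorphic_on_imp_continuous_on)
    show "0 < R/2" using R by simp
    fix x assume "norm (z - x) = R/2"
    then have "x \<in> cball z (R/2)" by (simp add: dist_norm)
    then show "norm (G x) \<le> 1" using sub bd by blast
  qed
  then show "norm (deriv G z) \<le> 2/R" by simp
qed


lemma p1_holo_subset: "p1_holomorphic_on f S \<Longrightarrow> T \<subseteq> S \<Longrightarrow> p1_holomorphic_on f T"
proof -
  assume a: "p1_holomorphic_on f S" and T: "T \<subseteq> S"
  have 1: "(\<lambda>z. f (Some z)) holomorphic_on {z. Some z \<in> T}"
    by (rule holomorphic_on_subset[of _ "{z. Some z \<in> S}"]) (use a T in \<open>auto simp: p1_holomorphic_on_def\<close>)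
  have 2: "(\<lambda>w. f (if w = 0 then None else Some (1 / w))) holomorphic_on
          {w. (if w = 0 then None else Some (1 / w)) \<in> T}" if "None \<in> T"
    by (rule holomorphic_on_subset[of _ "{w. (if w = 0 then None else Some (1 / w)) \<in> S}"])
       (use a T that in \<open>auto simp: p1_holomorphic_on_def\<close>)
  show ?thesis using 1 2 by (simp add: p1_holomorphic_on_def)
qed

lemma p1_holo_affine: "p1_holomorphic_on f S \<Longrightarrow> p1_holomorphic_on (\<lambda>x. (f x - c) / d) S"
  unfolding p1_holomorphic_on_def by (auto intro!: holomorphic_intros)

lemma om:
  assumes hol: "p1_holomorphic_on \<phi> \<Omega>" and inj: "inj_on \<phi> \<Omega>" and eta: "\<eta> > 0"
    and sub: "chart y ` ball 0 \<eta> \<subseteq> \<Omega>"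
  shows "open ((\<lambda>t. \<phi> (chart y t)) ` ball 0 \<eta>)"
proof (rule open_mapping_thm)
  show "(\<lambda>t. \<phi> (chart y t)) holomorphic_on ball 0 \<eta>"
    using sub by (intro chart_holo[OF hol]) auto
  show "open (ball (0::complex) \<eta>)" "connected (ball (0::complex) \<eta>)" by auto
  show "open (ball (0::complex) \<eta>)" "ball 0 \<eta> \<subseteq> ball (0::complex) \<eta>" by auto
  have a: "(0::complex) \<in> ball 0 \<eta>" "complex_of_real (\<eta>/2) \<in> ball 0 \<eta>" using eta by auto
  have "chart y 0 \<noteq> chart y (complex_of_real (\<eta>/2))" using eta chart_inj by fastforce
  then have "\<phi> (chart y 0) \<noteq> \<phi> (chart y (complex_of_real (\<eta>/2)))"
    using inj sub a by (meson image_subset_iff inj_on_contraD)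
  then show "\<not> (\<lambda>t. \<phi> (chart y t)) constant_on ball 0 \<eta>"
    unfolding constant_on_def using a by metis
qed

lemma key:
  assumes op: "p1_open \<Omega>" and hol: "p1_holomorphic_on \<phi> \<Omega>" and inj: "inj_on \<phi> \<Omega>"
    and img: "\<phi> ` \<Omega> \<subseteq> ball 0 1" and R: "R > 0" and pn: "p \<notin> \<Omega>"
    and punct: "\<forall>u\<in>ball 0 R - {0}. chart p u \<in> \<Omega>"
    and w: "0 < norm w" "norm w < R/2" and z0: "\<phi> (chart p w) = 0"
  shows "{r. 0 < r \<and> ball 0 r \<subseteq> \<phi> ` \<Omega>} \<noteq> {}"
    and "\<forall>r\<in>{r. 0 < r \<and> ball 0 r \<subseteq> \<phi> ` \<Omega>}. r \<le> 2/R * norm w"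
proof -
  define z where "z = chart p w"
  have wR: "norm w < R" using w R by linarith
  have wb: "w \<in> ball 0 R - {0}" using wR w(1) by (simp add: dist_norm)
  then have zO: "z \<in> \<Omega>" using punct by (simp add: z_def)
  obtain \<eta> where eta: "\<eta> > 0" "chart z ` ball 0 \<eta> \<subseteq> \<Omega>" using chart_nhd[OF op zO] by blast
  have "open ((\<lambda>t. \<phi> (chart z t)) ` ball 0 \<eta>)" by (rule om[OF hol inj eta])
  moreover have "0 \<in> (\<lambda>t. \<phi> (chart z t)) ` ball 0 \<eta>"
    using eta z0 by (auto simp: z_def intro!: image_eqI[of _ _ 0])
  ultimately obtain r where r: "r > 0" "ball 0 r \<subseteq> (\<lambda>t. \<phi> (chart z t)) ` ball 0 \<eta>"
    using open_contains_ball by blast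
  moreover have "(\<lambda>t. \<phi> (chart z t)) ` ball 0 \<eta> \<subseteq> \<phi> ` \<Omega>" using eta by auto
  ultimately show "{r. 0 < r \<and> ball 0 r \<subseteq> \<phi> ` \<Omega>} \<noteq> {}" by blast
  define g where "g = (\<lambda>u. \<phi> (chart p u))"
  have holg: "g holomorphic_on (ball 0 R - {0})"
    unfolding g_def using punct by (intro chart_holo[OF hol]) auto
  have bdg: "\<forall>u\<in>ball 0 R - {0}. norm (g u) < 1"
  proof
    fix u :: complex assume "u \<in> ball 0 R - {0}"
    then have "\<phi> (chart p u) \<in> \<phi> ` \<Omega>" using punct by blast
    then show "norm (g u) < 1" using img by (auto simp: g_def)
  qed
  obtain G where G: "G holomorphic_on ball 0 R" "\<forall>u\<in>ball 0 R - {0}. G u = g u" "\<forall>u\<in>ball 0 R. norm (G u) \<le> 1"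
    using core_extend[OF R holg bdg] by blast
  have Gw: "G w = 0" using G(2) wb z0 by (simp add: g_def)
  have "norm (G w - G 0) \<le> 2/R * norm (w - 0)" by (rule core_lip[OF R G(1) G(3) w(2)])
  then have G0: "norm (G 0) \<le> 2/R * norm w" using Gw by simp
  show "\<forall>r\<in>{r. 0 < r \<and> ball 0 r \<subseteq> \<phi> ` \<Omega>}. r \<le> 2/R * norm w"
  proof
    fix r assume "r \<in> {r. 0 < r \<and> ball 0 r \<subseteq> \<phi> ` \<Omega>}"
    then have rb: "ball 0 r \<subseteq> \<phi> ` \<Omega>" by simp
    have "r \<le> norm (G 0)"
    proof (rule ccontr)
      assume "\<not> r \<le> norm (G 0)"
      then have "G 0 \<in> ball 0 r" by simp
      then have "G 0 \<in> \<phi> ` \<Omega>" by (rule subsetD[OF rb])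
      then obtain y where y: "y \<in> \<Omega>" "\<phi> y = G 0" by (metis imageE)
      have "p \<noteq> y" using y(1) pn by blast
      from chart_sep[OF this] obtain e1 where e1: "e1 > 0" "\<forall>u v. norm u < e1 \<longrightarrow> norm v < e1 \<longrightarrow> chart p u \<noteq> chart y v"
        by blast
      obtain \<eta>y where etay: "\<eta>y > 0" "chart y ` ball 0 \<eta>y \<subseteq> \<Omega>" using chart_nhd[OF op y(1)] by blast
      define \<eta>' where "\<eta>' = min \<eta>y e1"
      define \<epsilon>' where "\<epsilon>' = min e1 R"
      have pos: "\<eta>' > 0" "\<epsilon>' > 0" using e1 etay R by (auto simp: \<eta>'_def \<epsilon>'_def)
      have sub1: "chart y ` ball 0 \<eta>' \<subseteq> \<Omega>" using etay by (auto simp: \<eta>'_def)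
      define O1 where "O1 = (\<lambda>t. \<phi> (chart y t)) ` ball 0 \<eta>'"
      define O2 where "O2 = G ` ball 0 \<epsilon>'"
      have o1: "open O1" unfolding O1_def by (rule om[OF hol inj pos(1) sub1])
      have subR: "ball 0 \<epsilon>' \<subseteq> ball 0 R" by (auto simp: \<epsilon>'_def)
      have o2: "open O2" unfolding O2_def
      proof (rule open_mapping_thm)
        show "G holomorphic_on ball 0 \<epsilon>'" using G(1) subR by (rule holomorphic_on_subset)
        show "open (ball (0::complex) \<epsilon>')" "connected (ball (0::complex) \<epsilon>')" by auto
        show "open (ball (0::complex) \<epsilon>')" "ball 0 \<epsilon>' \<subseteq> ball (0::complex) \<epsilon>'" by auto
        define a1 where "a1 = complex_of_real (\<epsilon>'/2)"
        define a2 where "a2 = complex_of_real (\<epsilon>'/3)"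
        have a: "a1 \<in> ball 0 \<epsilon>'" "a2 \<in> ball 0 \<epsilon>'" "a1 \<noteq> 0" "a2 \<noteq> 0" "a1 \<noteq> a2"
          using pos by (auto simp: a1_def a2_def)
        have aR: "a1 \<in> ball 0 R - {0}" "a2 \<in> ball 0 R - {0}"
          using subsetD[OF subR a(1)] subsetD[OF subR a(2)] a(3,4) by auto
        have "chart p a1 \<noteq> chart p a2" using a chart_inj by blast
        then have "g a1 \<noteq> g a2" using inj punct aR unfolding g_def by (meson inj_on_contraD)
        then have "G a1 \<noteq> G a2" using G(2) aR by simp
        then show "\<not> G constant_on ball 0 \<epsilon>'" unfolding constant_on_def using a by metis
      qed
      have "G 0 \<in> O1" unfolding O1_def using pos y by (auto intro!: image_eqI[of _ _ 0])
      moreover have "G 0 \<in> O2" unfolding O2_def using pos by auto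
      ultimately obtain \<rho> where rho: "\<rho> > 0" "ball (G 0) \<rho> \<subseteq> O1 \<inter> O2"
        using open_contains_ball[of "O1 \<inter> O2"] o1 o2 by blast
      define v where "v = G 0 + complex_of_real (\<rho>/2)"
      have "v \<in> ball (G 0) \<rho>" using rho by (simp add: v_def dist_norm)
      then have vO: "v \<in> O1" "v \<in> O2" using rho by auto
      have vne: "v \<noteq> G 0" using rho by (simp add: v_def)
      from vO(2) obtain s where s: "s \<in> ball 0 \<epsilon>'" "v = G s" unfolding O2_def by blast
      have "s \<noteq> 0" using s vne by auto
      then have sR: "s \<in> ball 0 R - {0}" using subsetD[OF subR s(1)] by auto
      then have vs: "v = \<phi> (chart p s)" using s G(2) by (simp add: g_def)
      from vO(1) obtain t where t: "t \<in> ball 0 \<eta>'" "v = \<phi> (chart y t)" unfolding O1_def by blast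
      have "chart p s \<in> \<Omega>" using punct sR by blast
      moreover have "chart y t \<in> \<Omega>" using sub1 t by blast
      ultimately have "chart p s = chart y t" using inj vs t by (metis inj_on_def)
      moreover have "norm s < e1" "norm t < e1" using s t by (auto simp: \<epsilon>'_def \<eta>'_def)
      ultimately show False using e1 by blast
    qed
    then show "r \<le> 2/R * norm w" using G0 by linarith
  qed
qed


lemma open_minus_finite:
  assumes "compactin p1_top K" "finite Q"
  shows "p1_open (UNIV - K - Q)"
proof -
  have "compactin p1_top (K \<union> Q)"
    by (rule compactin_Un[OF assms(1) finite_imp_compactin]) (use assms in auto)
  then have "closedin p1_top (K \<union> Q)" by (rule compactin_imp_closedin[OF Hausdorff_p1])
  then have "openin p1_top (UNIV - (K \<union> Q))" by (simp add: closedin_def)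
  then show ?thesis by (simp add: openin_p1_top Diff_Un Diff_eq)
qed

theorem lemma3p1:
  fixes K P :: "riemann_sphere set" and \<Omega> :: "riemann_sphere set" and p :: riemann_sphere
  assumes "compactin p1_top K"
    and "\<Omega> = UNIV - K"
    and "connectedin p1_top \<Omega>"
    and "\<exists>f. p1_holomorphic_on f \<Omega> \<and> inj_on f \<Omega> \<and> bounded (f ` \<Omega>)"
    and "finite P" and "P \<subseteq> \<Omega>"
    and "p \<in> P"
  shows "limitin euclideanreal (squeezing_function (\<Omega> - P)) 0 (atin_within p1_top p (\<Omega> - P))"
proof -
  define \<Omega>' where "\<Omega>' = \<Omega> - P"
  have op: "p1_open \<Omega>'" unfolding \<Omega>'_def assms(2) by (rule open_minus_finite[OF assms(1,5)])
  have op2: "p1_open (\<Omega> - (P - {p}))" unfolding assms(2) using assms(5)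
    by (intro open_minus_finite[OF assms(1)]) auto
  have pU: "p \<in> \<Omega> - (P - {p})" using assms(6,7) by auto
  have pn: "p \<notin> \<Omega>'" using assms(7) by (simp add: \<Omega>'_def)
  obtain R where R: "R > 0" "chart p ` ball 0 R \<subseteq> \<Omega> - (P - {p})" using chart_nhd[OF op2 pU] by blast
  have punct: "\<forall>u\<in>ball 0 R - {0}. chart p u \<in> \<Omega>'"
  proof
    fix u :: complex assume u: "u \<in> ball 0 R - {0}"
    then have "chart p u \<noteq> p" using chart_inj[of p u 0] by auto
    moreover have "chart p u \<in> \<Omega> - (P - {p})" using R(2) u by blast
    ultimately show "chart p u \<in> \<Omega>'" by (auto simp: \<Omega>'_def)
  qed
  obtain f where f: "p1_holomorphic_on f \<Omega>" "inj_on f \<Omega>" "bounded (f ` \<Omega>)" using assms(4) by blast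
  obtain M0 where M0: "\<forall>x\<in>\<Omega>. norm (f x) \<le> M0" using f(3) by (auto simp: bounded_iff)
  define M where "M = max M0 0"
  have M: "\<forall>x\<in>\<Omega>. norm (f x) \<le> M" "M \<ge> 0" using M0 by (auto simp: M_def intro: order_trans)
  define fam where "fam z = {\<phi>. p1_holomorphic_on \<phi> \<Omega>' \<and> inj_on \<phi> \<Omega>' \<and> \<phi> ` \<Omega>' \<subseteq> ball 0 1 \<and> \<phi> z = 0}" for z
  define inner where "inner \<phi> = Sup {r. 0 < r \<and> ball 0 r \<subseteq> \<phi> ` \<Omega>'}" for \<phi> :: "riemann_sphere \<Rightarrow> complex"
  have SF: "squeezing_function \<Omega>' z = (SUP \<phi>\<in>fam z. inner \<phi>)" for z
    by (simp add: squeezing_function_def fam_def inner_def)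
  have famne: "fam z \<noteq> {}" if z: "z \<in> \<Omega>'" for z
  proof -
    define d where "d = complex_of_real (2 * M + 1)"
    define \<phi> where "\<phi> x = (f x - f z) / d" for x
    have dn2: "norm d = 2 * M + 1" unfolding d_def norm_of_real using M(2) by simp
    then have dn: "d \<noteq> 0" "norm d = 2 * M + 1" using M(2) by auto
    have zO: "z \<in> \<Omega>" using z by (simp add: \<Omega>'_def)
    have h: "p1_holomorphic_on \<phi> \<Omega>'" unfolding \<phi>_def
      by (intro p1_holo_affine p1_holo_subset[OF f(1)]) (auto simp: \<Omega>'_def)
    have i: "inj_on \<phi> \<Omega>'"
      using f(2) dn(1) unfolding \<phi>_def inj_on_def \<Omega>'_def by auto
    have b: "\<phi> ` \<Omega>' \<subseteq> ball 0 1"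
    proof
      fix v assume "v \<in> \<phi> ` \<Omega>'"
      then obtain x where x: "x \<in> \<Omega>" "v = \<phi> x" by (auto simp: \<Omega>'_def)
      have "norm (f x - f z) \<le> norm (f x) + norm (f z)" by (rule norm_triangle_ineq4)
      also have "\<dots> \<le> 2 * M" using M(1) x(1) zO by (smt (verit))
      finally have "norm (f x - f z) < 2 * M + 1" by simp
      moreover have "2 * M + 1 > 0" using M(2) by simp
      ultimately have "norm (f x - f z) / (2 * M + 1) < 1" by (simp add: divide_less_eq)
      then show "v \<in> ball 0 1" using dn x by (simp add: \<phi>_def norm_divide)
    qed
    have "\<phi> z = 0" by (simp add: \<phi>_def)
    then have "\<phi> \<in> fam z" using h i b by (simp add: fam_def)
    then show ?thesis by blast
  qed
  have bound: "0 < squeezing_function \<Omega>' (chart p w) \<and> squeezing_function \<Omega>' (chart p w) \<le> 2/R * norm w"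
    if w: "0 < norm w" "norm w < R/2" for w
  proof -
    define z where "z = chart p w"
    have "norm w < R" using w R by linarith
    then have zO: "z \<in> \<Omega>'" using punct w(1) by (simp add: z_def)
    have inb: "0 < inner \<phi> \<and> inner \<phi> \<le> 2/R * norm w" if "\<phi> \<in> fam z" for \<phi>
    proof -
      have \<phi>: "p1_holomorphic_on \<phi> \<Omega>'" "inj_on \<phi> \<Omega>'" "\<phi> ` \<Omega>' \<subseteq> ball 0 1" "\<phi> (chart p w) = 0"
        using that by (auto simp: fam_def z_def)
      note k = key[OF op \<phi>(1,2,3) R(1) pn punct w \<phi>(4)]
      obtain r0 where r0: "r0 \<in> {r. 0 < r \<and> ball 0 r \<subseteq> \<phi> ` \<Omega>'}" using k(1) by blast
      have bdd: "bdd_above {r. 0 < r \<and> ball 0 r \<subseteq> \<phi> ` \<Omega>'}" using k(2) by (auto simp: bdd_above_def)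
      have "r0 \<le> inner \<phi>" unfolding inner_def by (rule cSup_upper[OF r0 bdd])
      moreover have "inner \<phi> \<le> 2/R * norm w" unfolding inner_def
        using k by (intro cSup_least) auto
      ultimately show ?thesis using r0 by auto
    qed
    obtain \<phi>0 where \<phi>0: "\<phi>0 \<in> fam z" using famne[OF zO] by blast
    have bdd: "bdd_above (inner ` fam z)" using inb by (auto simp: bdd_above_def)
    have "inner \<phi>0 \<le> (SUP \<phi>\<in>fam z. inner \<phi>)" by (rule cSUP_upper[OF \<phi>0 bdd])
    moreover have "(SUP \<phi>\<in>fam z. inner \<phi>) \<le> 2/R * norm w"
      using inb famne[OF zO] by (intro cSUP_least) auto
    ultimately show ?thesis using inb[OF \<phi>0] by (simp add: SF z_def)
  qed
  have "((squeezing_function \<Omega>') \<longlongrightarrow> 0) (atin_within p1_top p \<Omega>')"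
  proof (rule tendstoI)
    fix e :: real assume e: "e > 0"
    define \<delta> where "\<delta> = min (R/2) (e * R / 4)"
    have dpos: "\<delta> > 0" using e R by (simp add: \<delta>_def)
    show "\<forall>\<^sub>F x in atin_within p1_top p \<Omega>'. dist (squeezing_function \<Omega>' x) 0 < e"
      unfolding eventually_atin_within
    proof (rule disjI2, intro exI conjI ballI impI)
      show "openin p1_top (chart p ` ball 0 \<delta>)" using chart_open[OF dpos] by (simp add: openin_p1_top)
      show "p \<in> chart p ` ball 0 \<delta>" using dpos by (metis chart_0 centre_in_ball image_eqI)
      fix x assume x: "x \<in> chart p ` ball 0 \<delta>" and "x \<in> \<Omega>' \<and> x \<noteq> p"
      then obtain u where u: "u \<in> ball 0 \<delta>" "x = chart p u" by blast
      have "u \<noteq> 0" using u \<open>x \<in> \<Omega>' \<and> x \<noteq> p\<close> by auto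
      have un: "norm u < R/2" "norm u < e * R / 4" using u by (auto simp: \<delta>_def)
      have b: "0 < squeezing_function \<Omega>' x" "squeezing_function \<Omega>' x \<le> 2/R * norm u"
        using bound[of u] \<open>u \<noteq> 0\<close> un u(2) by auto
      have "2/R * norm u < 2/R * (e * R / 4)" using un R by (intro mult_strict_left_mono) auto
      also have "\<dots> = e / 2" using R by (simp add: field_simps)
      finally show "dist (squeezing_function \<Omega>' x) 0 < e" using b e by simp
    qed
  qed
  then show ?thesis by (simp add: \<Omega>'_def)
qed

end
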